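(* The orbit space $\mathbb{R}P^5/\mathbb{Z}_2^4$ is homeomorphic to the quotient space $(\Delta_{4,2}\times\mathbb{R}P^2)/\approx$, where $(x,r)\approx(y,r')$ if and only if either $(x,r)=(y,r')$ or $x=y\in\partial\Delta_{4,2}$.
   Context: The group $\mathbb{Z}_2^4=\{\pm1\}^4$ acts on $\mathbb{R}P^5$, with homogeneous coordinates $[x_{12}:x_{13}:x_{14}:x_{23}:x_{24}:x_{34}]$, by $x_{ij}\mapsto\epsilon_i\epsilon_jx_{ij}$, i.e. via the second symmetric power $\mathbb{Z}_2^4\to\mathbb{Z}_2^6$, $(\epsilon_1,\dots,\epsilon_4)\mapsto(\epsilon_1\epsilon_2,\epsilon_1\epsilon_3,\epsilon_1\epsilon_4,\epsilon_2\epsilon_3,\epsilon_2\epsilon_4,\epsilon_3\epsilon_4)$, composed with the canonical coordinatewise action of $\mathbb{Z}_2^6$ on $\mathbb{R}P^5$. $\Delta_{4,2}\subset\mathbb{R}^4$ is the convex hull of the six points $\delta_{ij}$ ($1\le i<j\le4$) with entries $1$ in positions $i,j$ and $0$ elsewhere, and $\partial\Delta_{4,2}$ is its boundary. *)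

theory Defs
  imports "HOL-Analysis.Analysis"
begin

definition quot_top :: "'a topology \<Rightarrow> ('a \<Rightarrow> 'b) \<Rightarrow> 'b topology" where
  "quot_top X f = topology (\<lambda>U. U \<subseteq> f ` topspace X \<and> openin X {x \<in> topspace X. f x \<in> U})"

lemma istopology_quot_top:
  "istopology (\<lambda>U. U \<subseteq> f ` topspace X \<and> openin X {x \<in> topspace X. f x \<in> U})"
proof -
  have i: "{x \<in> topspace X. f x \<in> S \<inter> T} = {x \<in> topspace X. f x \<in> S} \<inter> {x \<in> topspace X. f x \<in> T}" for S T
    by auto
  have u: "{x \<in> topspace X. f x \<in> \<Union>K} = \<Union>((\<lambda>S. {x \<in> topspace X. f x \<in> S}) ` K)" for K
    by auto
  show ?thesis
    unfolding istopology_def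
    by (auto simp only: i u intro!: openin_Int openin_Union)
qed

definition quotient_space :: "'a topology \<Rightarrow> ('a \<Rightarrow> 'a \<Rightarrow> bool) \<Rightarrow> 'a set topology" where
  "quotient_space X R = quot_top X (\<lambda>x. {y \<in> topspace X. R x y})"

definition proj_space :: "(real ^ 'n) set topology" where
  "proj_space = quotient_space (top_of_set (UNIV - {0}))
      (\<lambda>x y. \<exists>c::real. c \<noteq> 0 \<and> y = c *\<^sub>R x)"

abbreviation RP5 :: "(real ^ 6) set topology" where "RP5 \<equiv> proj_space"
abbreviation RP2 :: "(real ^ 3) set topology" where "RP2 \<equiv> proj_space"

text \<open>Coordinates of real^6 are (x12, x13, x14, x23, x24, x34) in this order.\<close>
definition Z2_4 :: "(real ^ 4) set" where
  "Z2_4 = {e. \<forall>i. e $ i = 1 \<or> e $ i = -1}"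

definition sym2_act :: "real ^ 4 \<Rightarrow> real ^ 6 \<Rightarrow> real ^ 6" where
  "sym2_act e x = vector
     [e$1 * e$2 * x$1, e$1 * e$3 * x$2, e$1 * e$4 * x$3,
      e$2 * e$3 * x$4, e$2 * e$4 * x$5, e$3 * e$4 * x$6]"

definition RP5_act :: "real ^ 4 \<Rightarrow> (real ^ 6) set \<Rightarrow> (real ^ 6) set" where
  "RP5_act e P = sym2_act e ` P"

definition RP5_orbit_space :: "(real ^ 6) set set topology" where
  "RP5_orbit_space = quotient_space RP5 (\<lambda>P Q. \<exists>e \<in> Z2_4. Q = RP5_act e P)"

definition Delta42 :: "(real ^ 4) set" where
  "Delta42 = convex hull {vector [1,1,0,0], vector [1,0,1,0], vector [1,0,0,1],
                          vector [0,1,1,0], vector [0,1,0,1], vector [0,0,1,1]}"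

definition glued_space :: "((real ^ 4) \<times> (real ^ 3) set) set topology" where
  "glued_space = quotient_space (prod_topology (top_of_set Delta42) RP2)
     (\<lambda>p q. p = q \<or> (fst p = fst q \<and> fst p \<in> rel_frontier Delta42))"

end

theory Submission
  imports Defs
begin

lemma openin_quot_top:
  "openin (quot_top X f) U \<longleftrightarrow> U \<subseteq> f ` topspace X \<and> openin X {x \<in> topspace X. f x \<in> U}"
  unfolding quot_top_def by (simp add: istopology_quot_top[of f X])

lemma topspace_quot_top: "topspace (quot_top X f) = f ` topspace X"
proof -
  have "openin (quot_top X f) (f ` topspace X)"
  proof -
    have "{x \<in> topspace X. f x \<in> f ` topspace X} = topspace X" by auto
    then show ?thesis unfolding openin_quot_top by simp
  qed
  then have "f ` topspace X \<subseteq> topspace (quot_top X f)" by (rule openin_subset)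
  moreover have "topspace (quot_top X f) \<subseteq> f ` topspace X"
    using openin_quot_top[of X f "topspace (quot_top X f)"] by simp
  ultimately show ?thesis by blast
qed

lemma quotient_map_quot_top: "quotient_map X (quot_top X f) f"
  unfolding quotient_map_def topspace_quot_top openin_quot_top by blast

lemma quotient_space_homeo:
  assumes f: "continuous_map X Y f" and cX: "compact_space X" and hY: "Hausdorff_space Y"
    and R: "\<And>x y. x \<in> topspace X \<Longrightarrow> y \<in> topspace X \<Longrightarrow> R x y \<longleftrightarrow> f x = f y"
  shows "quotient_space X R homeomorphic_space subtopology Y (f ` topspace X)"
proof -
  define q where "q = (\<lambda>x. {y \<in> topspace X. R x y})"
  have qm: "quotient_map X (quotient_space X R) q"
    unfolding quotient_space_def q_def by (rule quotient_map_quot_top)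
  have fm: "quotient_map X (subtopology Y (f ` topspace X)) f"
  proof (rule continuous_imp_quotient_map)
    show "continuous_map X (subtopology Y (f ` topspace X)) f"
      using f by (simp add: continuous_map_in_subtopology)
    show "Hausdorff_space (subtopology Y (f ` topspace X))"
      using hY by (simp add: Hausdorff_space_subtopology)
    show "f ` topspace X = topspace (subtopology Y (f ` topspace X))"
      using f by (auto simp: continuous_map_def)
  qed (rule cX)
  have fib: "f x = f y" if "x \<in> topspace X" "y \<in> topspace X" "q x = q y" for x y
  proof -
    have "R x x" using R[OF that(1) that(1)] by simp
    then have "x \<in> q x" using that(1) by (simp add: q_def)
    then have "x \<in> q y" using that(3) by blast
    then have "R y x" by (simp add: q_def)
    then show "f x = f y" using R[OF that(2) that(1)] by simp
  qed
  have fib2: "q x = q y" if "x \<in> topspace X" "y \<in> topspace X" "f x = f y" for x y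
  proof -
    have "R x z \<longleftrightarrow> R y z" if "z \<in> topspace X" for z
      using R[OF \<open>x \<in> topspace X\<close> that] R[OF \<open>y \<in> topspace X\<close> that] \<open>f x = f y\<close> by simp
    then show ?thesis unfolding q_def by blast
  qed
  obtain g where g: "continuous_map (quotient_space X R) (subtopology Y (f ` topspace X)) g"
     "g ` topspace (quotient_space X R) = f ` topspace X"
     "\<And>x. x \<in> topspace X \<Longrightarrow> g (q x) = f x"
    using quotient_map_lift_exists[OF qm quotient_imp_continuous_map[OF fm] fib] by blast
  obtain k where k: "continuous_map (subtopology Y (f ` topspace X)) (quotient_space X R) k"
     "k ` topspace (subtopology Y (f ` topspace X)) = q ` topspace X"
     "\<And>x. x \<in> topspace X \<Longrightarrow> k (f x) = q x"
    using quotient_map_lift_exists[OF fm quotient_imp_continuous_map[OF qm] fib2] by blast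
  have tq: "topspace (quotient_space X R) = q ` topspace X"
    using qm quotient_imp_surjective_map by blast
  have tf: "topspace (subtopology Y (f ` topspace X)) = f ` topspace X"
    using fm quotient_imp_surjective_map by blast
  have "homeomorphic_maps (quotient_space X R) (subtopology Y (f ` topspace X)) g k"
    unfolding homeomorphic_maps_def using g(1,3) k(1,3) tq tf by auto
  then show ?thesis unfolding homeomorphic_space_def by blast
qed

definition pq :: "real^'n \<Rightarrow> (real^'n) set" where
  "pq x = {y \<in> topspace (top_of_set (UNIV - {0})). \<exists>c::real. c \<noteq> 0 \<and> y = c *\<^sub>R x}"

lemma qm_proj: "quotient_map (top_of_set (UNIV - {0})) proj_space pq"
  unfolding proj_space_def quotient_space_def pq_def by (rule quotient_map_quot_top)

lemma topspace_proj: "topspace (proj_space :: (real^'n) set topology) = pq ` (UNIV - {0})"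
  by (metis qm_proj quotient_imp_surjective_map topspace_euclidean_subtopology)

lemma pq_eq:
  fixes x y :: "real^'n"
  assumes "x \<noteq> 0" "y \<noteq> 0"
  shows "pq x = pq y \<longleftrightarrow> (\<exists>c. c \<noteq> 0 \<and> y = c *\<^sub>R x)"
proof
  assume "pq x = pq y"
  moreover have "y \<in> pq y" using assms unfolding pq_def by (auto intro!: exI[of _ 1])
  ultimately show "\<exists>c. c \<noteq> 0 \<and> y = c *\<^sub>R x" unfolding pq_def by auto
next
  assume "\<exists>c. c \<noteq> 0 \<and> y = c *\<^sub>R x"
  then obtain c where c: "c \<noteq> 0" "y = c *\<^sub>R x" by auto
  have "(\<exists>d. d \<noteq> 0 \<and> z = d *\<^sub>R x) \<longleftrightarrow> (\<exists>d. d \<noteq> 0 \<and> z = d *\<^sub>R y)" for z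
  proof
    assume "\<exists>d. d \<noteq> 0 \<and> z = d *\<^sub>R x"
    then obtain d where "d \<noteq> 0" "z = d *\<^sub>R x" by auto
    then show "\<exists>d. d \<noteq> 0 \<and> z = d *\<^sub>R y" using c by (intro exI[of _ "d / c"]) auto
  next
    assume "\<exists>d. d \<noteq> 0 \<and> z = d *\<^sub>R y"
    then obtain d where "d \<noteq> 0" "z = d *\<^sub>R y" by auto
    then show "\<exists>d. d \<noteq> 0 \<and> z = d *\<^sub>R x" using c by (intro exI[of _ "d * c"]) auto
  qed
  then show "pq x = pq y" unfolding pq_def by auto
qed

lemma compact_proj: "compact_space (proj_space :: (real^'n) set topology)"
proof -
  have "pq ` (UNIV - {0}) = pq ` (sphere (0::real^'n) 1)"
  proof
    show "pq ` (UNIV - {0}) \<subseteq> pq ` sphere (0::real^'n) 1"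
    proof
      fix P assume "P \<in> pq ` (UNIV - {0::real^'n})"
      then obtain x :: "real^'n" where x: "x \<noteq> 0" "P = pq x" by auto
      have "pq x = pq ((1 / norm x) *\<^sub>R x)"
        using x by (subst pq_eq) (auto intro!: exI[of _ "1 / norm x"])
      moreover have "(1 / norm x) *\<^sub>R x \<in> sphere 0 1" using x by simp
      ultimately show "P \<in> pq ` sphere (0::real^'n) 1" using x by blast
    qed
  next
    show "pq ` sphere (0::real^'n) 1 \<subseteq> pq ` (UNIV - {0::real^'n})" by auto
  qed
  moreover have "compactin proj_space (pq ` (sphere (0::real^'n) 1))"
    using image_compactin[OF _ quotient_imp_continuous_map[OF qm_proj], of "sphere (0::real^'n) 1"]
    by (force simp: compactin_subtopology subset_iff)
  ultimately show ?thesis unfolding compact_space_def topspace_proj by simp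
qed

lemma proj_lift:
  fixes phi :: "real^'n \<Rightarrow> 'b::topological_space"
  assumes "continuous_on (UNIV - {0}) phi"
    and "\<And>x c. x \<noteq> 0 \<Longrightarrow> c \<noteq> 0 \<Longrightarrow> phi (c *\<^sub>R x) = phi x"
  obtains F where "continuous_map proj_space euclidean F" "\<And>x. x \<noteq> 0 \<Longrightarrow> F (pq x) = phi x"
proof -
  have "continuous_map (top_of_set (UNIV - {0})) euclidean phi"
    using assms(1) by (simp add: continuous_map_iff_continuous)
  moreover have "phi x = phi y" if "x \<in> topspace (top_of_set (UNIV - {0}))"
     "y \<in> topspace (top_of_set (UNIV - {0}))" "pq x = pq y" for x y
    using that assms(2) pq_eq by (metis Diff_iff insertI1 topspace_euclidean_subtopology)
  ultimately obtain g where "continuous_map proj_space euclidean g"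
     "\<And>x. x \<in> topspace (top_of_set (UNIV - {0})) \<Longrightarrow> g (pq x) = phi x"
    using quotient_map_lift_exists[OF qm_proj] by metis
  then show ?thesis using that by simp
qed

lemma vector_6 [simp]:
 "(vector [a,b,c,d,e,f] ::('a::zero)^6)$1 = a"
 "(vector [a,b,c,d,e,f] ::('a::zero)^6)$2 = b"
 "(vector [a,b,c,d,e,f] ::('a::zero)^6)$3 = c"
 "(vector [a,b,c,d,e,f] ::('a::zero)^6)$4 = d"
 "(vector [a,b,c,d,e,f] ::('a::zero)^6)$5 = e"
 "(vector [a,b,c,d,e,f] ::('a::zero)^6)$6 = f"
  unfolding vector_def by simp_all

lemma vector_4 [simp]:
 "(vector [a,b,c,d] ::('a::zero)^4)$1 = a"
 "(vector [a,b,c,d] ::('a::zero)^4)$2 = b"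
 "(vector [a,b,c,d] ::('a::zero)^4)$3 = c"
 "(vector [a,b,c,d] ::('a::zero)^4)$4 = d"
  unfolding vector_def by simp_all

lemma exhaust_6:
  fixes x :: 6
  shows "x = 1 \<or> x = 2 \<or> x = 3 \<or> x = 4 \<or> x = 5 \<or> x = 6"
proof (induct x)
  case (of_int z)
  then have "z = 0 \<or> z = 1 \<or> z = 2 \<or> z = 3 \<or> z = 4 \<or> z = 5" by fastforce
  then show ?case by auto
qed

lemma forall_6: "(\<forall>i::6. P i) \<longleftrightarrow> P 1 \<and> P 2 \<and> P 3 \<and> P 4 \<and> P 5 \<and> P 6"
  by (metis exhaust_6)

definition Q3 :: "real \<Rightarrow> real \<Rightarrow> real \<Rightarrow> real \<times> real \<times> real \<times> real \<times> real \<times> real" where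
  "Q3 a b c = (a*a, b*b, c*c, a*b, a*c, b*c)"

lemma Q3_scale: "Q3 (t*a) (t*b) (t*c) = (t*t) *\<^sub>R Q3 a b c"
  by (simp add: Q3_def algebra_simps)

lemma sq1: "(r::real) * r = 1 \<Longrightarrow> r = 1 \<or> r = -1"
  by (metis minus_equation_iff mult_cancel_left1 square_eq_iff)

lemma Q3_eq:
  assumes "Q3 a b c = Q3 a' b' c'"
  shows "\<exists>d. d * d = 1 \<and> a' = d*a \<and> b' = d*b \<and> c' = d*c"
proof -
  have e: "a*a = a'*a'" "b*b = b'*b'" "c*c = c'*c'" "a*b = a'*b'" "a*c = a'*c'" "b*c = b'*c'"
    using assms by (auto simp: Q3_def)
  have sq: "x*x = y*y \<Longrightarrow> y = x \<or> y = -x" for x y :: real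
    by (metis minus_equation_iff square_eq_iff)
  show ?thesis
  proof (cases "a = 0")
    case False
    obtain d where d: "d = a'/a" by blast
    have "d*d = (a'*a')/(a*a)" using d by simp
    moreover have "a' \<noteq> 0" using e(1) False by (metis mult_eq_0_iff)
    ultimately have dd: "d*d = 1" using e(1) False by simp
    have ha: "a' = d*a" using d False by simp
    have "a*b = a*(d*b')" using e(4) ha by (simp add: algebra_simps)
    then have "b = d*b'" using False by simp
    then have "d*b = (d*d)*b'" by (simp add: algebra_simps)
    then have "b' = d*b" using dd by simp
    moreover have "a*c = a*(d*c')" using e(5) ha by (simp add: algebra_simps)
    then have "c = d*c'" using False by simp
    then have "d*c = (d*d)*c'" by (simp add: algebra_simps)
    then have "c' = d*c" using dd by simp
    ultimately show ?thesis using dd ha by blast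
  next
    case a0: True
    then have a'0: "a' = 0" using e(1) by simp
    show ?thesis
    proof (cases "b = 0")
      case False
      obtain d where d: "d = b'/b" by blast
      have "d*d = (b'*b')/(b*b)" using d by simp
      moreover have "b' \<noteq> 0" using e(2) False by (metis mult_eq_0_iff)
      ultimately have dd: "d*d = 1" using e(2) False by simp
      have hb: "b' = d*b" using d False by simp
      have "b*c = b*(d*c')" using e(6) hb by (simp add: algebra_simps)
      then have "c = d*c'" using False by simp
      then have "d*c = (d*d)*c'" by (simp add: algebra_simps)
      then have "c' = d*c" using dd by simp
      then show ?thesis using dd hb a0 a'0 by (intro exI[of _ d]) simp
    next
      case b0: True
      then have b'0: "b' = 0" using e(2) by simp
      from sq[OF e(3)] have "c' = 1 * c \<or> c' = (-1) * c" by simp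
      then show ?thesis
      proof
        assume "c' = 1 * c" then show ?thesis using a0 a'0 b0 b'0 by (intro exI[of _ 1]) simp
      next
        assume "c' = (-1) * c" then show ?thesis using a0 a'0 b0 b'0 by (intro exI[of _ "-1"]) simp
      qed
    qed
  qed
qed

lemma squares_lemma:
  fixes a b a' b' d :: real
  assumes "a^2 - b^2 = a'^2 - b'^2" "a*b = d*(a'*b')" "d*d = 1"
  shows "a^2 = a'^2 \<and> b^2 = b'^2"
proof -
  have "(a^2+b^2)^2 = (a^2-b^2)^2 + 4*(a*b)^2" by (simp add: algebra_simps power2_eq_square)
  also have "(a*b)^2 = (a'*b')^2" using assms(2,3) by (simp add: power2_eq_square algebra_simps)
  also have "(a^2-b^2)^2 + 4*(a'*b')^2 = (a'^2+b'^2)^2"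
    by (simp only: assms(1)) (simp add: algebra_simps power2_eq_square)
  finally have "(a^2+b^2)^2 = (a'^2+b'^2)^2" .
  then have "a^2+b^2 = a'^2+b'^2"
    by (simp add: power2_eq_iff_nonneg)
  then show ?thesis using assms(1) by linarith
qed

definition sgA :: "real \<Rightarrow> real \<Rightarrow> real \<Rightarrow> real \<Rightarrow> real \<Rightarrow> real" where
  "sgA d xi xj yi yj = (if xi \<noteq> 0 then yi/xi else if xj \<noteq> 0 then d*(yj/xj) else 1)"
definition sgB :: "real \<Rightarrow> real \<Rightarrow> real \<Rightarrow> real \<Rightarrow> real \<Rightarrow> real" where
  "sgB d xi xj yi yj = (if xj \<noteq> 0 then yj/xj else d * sgA d xi xj yi yj)"

lemma pair_signs:
  fixes xi xj yi yj d :: real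
  assumes "yi^2 = xi^2" "yj^2 = xj^2" "yi*yj = d*(xi*xj)" "d*d = 1"
  shows "sgA d xi xj yi yj * sgA d xi xj yi yj = 1 \<and> sgB d xi xj yi yj * sgB d xi xj yi yj = 1
     \<and> sgA d xi xj yi yj * sgB d xi xj yi yj = d
     \<and> yi = sgA d xi xj yi yj * xi \<and> yj = sgB d xi xj yi yj * xj"
proof -
  have r1: "(yi/xi)*(yi/xi) = 1" if "xi \<noteq> 0" using assms(1) that by (simp add: field_simps power2_eq_square)
  have r2: "(yj/xj)*(yj/xj) = 1" if "xj \<noteq> 0" using assms(2) that by (simp add: field_simps power2_eq_square)
  have z1: "yi = 0" if "xi = 0" using assms(1) that by simp
  have z2: "yj = 0" if "xj = 0" using assms(2) that by simp
  show ?thesis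
  proof (cases "xi = 0")
    case T: True
    show ?thesis
    proof (cases "xj = 0")
      case True
      then have "sgA d xi xj yi yj = 1" "sgB d xi xj yi yj = d" using T by (simp_all add: sgA_def sgB_def)
      then show ?thesis using T True z1 z2 assms(4) by simp
    next
      case False
      then have A: "sgA d xi xj yi yj = d*(yj/xj)" "sgB d xi xj yi yj = yj/xj" using T by (simp_all add: sgA_def sgB_def)
      have "d*(yj/xj) * (d*(yj/xj)) = (d*d) * ((yj/xj)*(yj/xj))" by (simp add: algebra_simps)
      also have "\<dots> = 1" by (simp only: r2[OF False] assms(4))
      finally have 1: "d*(yj/xj) * (d*(yj/xj)) = 1" .
      have "d*(yj/xj) * (yj/xj) = d*((yj/xj) * (yj/xj))" by (rule mult.assoc)
      then have 2: "d*(yj/xj) * (yj/xj) = d" by (simp only: r2[OF False] mult_1_right)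
      have 3: "yj = (yj/xj)*xj" using False by simp
      have 4: "yi = d*(yj/xj)*xi" using T z1 by simp
      have 5: "(yj/xj) * (yj/xj) = 1" by (rule r2[OF False])
      show ?thesis unfolding A using 1 2 5 3 4 by (simp only: mult.commute[of "yj/xj" "d*(yj/xj)"] mult.assoc)
    qed
  next
    case F: False
    show ?thesis
    proof (cases "xj = 0")
      case True
      then have A: "sgA d xi xj yi yj = yi/xi" "sgB d xi xj yi yj = d*(yi/xi)" using F by (simp_all add: sgA_def sgB_def)
      have "d*(yi/xi) * (d*(yi/xi)) = (d*d) * ((yi/xi)*(yi/xi))" by (simp add: algebra_simps)
      also have "\<dots> = 1" by (simp only: r1[OF F] assms(4))
      finally have 1: "d*(yi/xi) * (d*(yi/xi)) = 1" .
      have "(yi/xi) * (d*(yi/xi)) = d*((yi/xi) * (yi/xi))" by (rule mult.left_commute)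
      then have 2: "(yi/xi) * (d*(yi/xi)) = d" by (simp only: r1[OF F] mult_1_right)
      have 3: "yi = (yi/xi)*xi" using F by simp
      have 4: "yj = d*(yi/xi)*xj" using True z2 by simp
      show ?thesis unfolding A using 1 2 r1[OF F] 3 4 by blast
    next
      case False
      then have A: "sgA d xi xj yi yj = yi/xi" "sgB d xi xj yi yj = yj/xj" using F by (simp_all add: sgA_def sgB_def)
      have "(yi/xi)*(yj/xj) = (yi*yj)/(xi*xj)" by simp
      also have "\<dots> = d" using assms(3) F False by simp
      finally have 1: "(yi/xi)*(yj/xj) = d" .
      have 3: "yi = (yi/xi)*xi" "yj = (yj/xj)*xj" using F False by simp_all
      show ?thesis unfolding A using 1 3 r1[OF F] r2[OF False] by blast
    qed
  qed
qed

lemma signs_alg: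
  fixes s1 s2 s3 s4 s5 s6 d :: real
  assumes "s1* s1 = 1" "s2* s2 = 1" "s3* s3 = 1" "s4* s4 = 1" "s5* s5 = 1" "s6* s6 = 1"
    "s1* s6 = d" "s2* s5 = d" "s3* s4 = d"
  defines "c \<equiv> s1* s2* s4"
  shows "c*c = 1 \<and> (c* s1)*(c* s1) = 1 \<and> (c* s2)*(c* s2) = 1 \<and> (c* s3)*(c* s3) = 1 \<and>
    c*(1*(c* s1)) = s1 \<and> c*(1*(c* s2)) = s2 \<and> c*(1*(c* s3)) = s3 \<and>
    c*((c* s1)*(c* s2)) = s4 \<and> c*((c* s1)*(c* s3)) = s5 \<and> c*((c* s2)*(c* s3)) = s6"
  using sq1[OF assms(1)] sq1[OF assms(2)] sq1[OF assms(3)] sq1[OF assms(4)] sq1[OF assms(5)]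
    sq1[OF assms(6)] assms(7-9) unfolding c_def
  by auto

lemma sign_lemma:
  fixes x y :: "real^6"
  assumes sq: "\<And>i. (y$i)^2 = (x$i)^2" and dd: "d*d = 1"
    and p1: "y$1*y$6 = d*(x$1*x$6)" and p2: "y$2*y$5 = d*(x$2*x$5)" and p3: "y$3*y$4 = d*(x$3*x$4)"
  shows "\<exists>e\<in>Z2_4. \<exists>c. c \<noteq> 0 \<and> y = c *\<^sub>R sym2_act e x"
proof -
  define s1 where "s1 = sgA d (x$1) (x$6) (y$1) (y$6)"
  define s6 where "s6 = sgB d (x$1) (x$6) (y$1) (y$6)"
  define s2 where "s2 = sgA d (x$2) (x$5) (y$2) (y$5)"
  define s5 where "s5 = sgB d (x$2) (x$5) (y$2) (y$5)"
  define s3 where "s3 = sgA d (x$3) (x$4) (y$3) (y$4)"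
  define s4 where "s4 = sgB d (x$3) (x$4) (y$3) (y$4)"
  have A: "s1* s1 = 1" "s6* s6 = 1" "s1* s6 = d" "y$1 = s1 * x$1" "y$6 = s6 * x$6"
    using pair_signs[OF sq sq p1 dd] unfolding s1_def s6_def by auto
  have B: "s2* s2 = 1" "s5* s5 = 1" "s2* s5 = d" "y$2 = s2 * x$2" "y$5 = s5 * x$5"
    using pair_signs[OF sq sq p2 dd] unfolding s2_def s5_def by auto
  have C: "s3* s3 = 1" "s4* s4 = 1" "s3* s4 = d" "y$3 = s3 * x$3" "y$4 = s4 * x$4"
    using pair_signs[OF sq sq p3 dd] unfolding s3_def s4_def by auto
  define c where "c = s1* s2* s4"
  define e :: "real^4" where "e = vector [1, c* s1, c* s2, c* s3]"
  have S: "c*c = 1 \<and> (c* s1)*(c* s1) = 1 \<and> (c* s2)*(c* s2) = 1 \<and> (c* s3)*(c* s3) = 1 \<and>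
    c*(1*(c* s1)) = s1 \<and> c*(1*(c* s2)) = s2 \<and> c*(1*(c* s3)) = s3 \<and>
    c*((c* s1)*(c* s2)) = s4 \<and> c*((c* s1)*(c* s3)) = s5 \<and> c*((c* s2)*(c* s3)) = s6"
    unfolding c_def by (rule signs_alg) (use A B C in auto)
  have eZ: "e \<in> Z2_4"
    unfolding Z2_4_def e_def forall_4 using S sq1 by auto
  have c0: "c \<noteq> 0" using S by auto
  have Y1: "y$1 = c * (1 * (c* s1) * x$1)"
  proof -
    have "y$1 = (c*(1*(c* s1))) * x$1" using A(4) S by simp
    then show ?thesis by (simp add: ac_simps)
  qed
  have Y2: "y$2 = c * (1 * (c* s2) * x$2)"
  proof -
    have "y$2 = (c*(1*(c* s2))) * x$2" using B(4) S by simp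
    then show ?thesis by (simp add: ac_simps)
  qed
  have Y3: "y$3 = c * (1 * (c* s3) * x$3)"
  proof -
    have "y$3 = (c*(1*(c* s3))) * x$3" using C(4) S by simp
    then show ?thesis by (simp add: ac_simps)
  qed
  have Y4: "y$4 = c * ((c* s1) * (c* s2) * x$4)"
  proof -
    have S8: "c*((c* s1)*(c* s2)) = s4" using S by blast
    have "y$4 = (c*((c* s1)*(c* s2))) * x$4" by (simp only: C(5) S8)
    then show ?thesis by (simp add: ac_simps)
  qed
  have Y5: "y$5 = c * ((c* s1) * (c* s3) * x$5)"
  proof -
    have S8: "c*((c* s1)*(c* s3)) = s5" using S by blast
    have "y$5 = (c*((c* s1)*(c* s3))) * x$5" by (simp only: B(5) S8)
    then show ?thesis by (simp add: ac_simps)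
  qed
  have Y6: "y$6 = c * ((c* s2) * (c* s3) * x$6)"
  proof -
    have S8: "c*((c* s2)*(c* s3)) = s6" using S by blast
    have "y$6 = (c*((c* s2)*(c* s3))) * x$6" by (simp only: A(5) S8)
    then show ?thesis by (simp add: ac_simps)
  qed
  have "y = c *\<^sub>R sym2_act e x"
    unfolding vec_eq_iff forall_6 sym2_act_def e_def
    by (simp only: vector_scaleR_component vector_6 vector_4 Y1 Y2 Y3 Y4 Y5 Y6) simp
  then show ?thesis using eZ c0 by blast
qed

definition MH :: "real \<Rightarrow> real \<Rightarrow> real \<Rightarrow> real \<Rightarrow> real \<Rightarrow> real \<Rightarrow> real" where
  "MH a b c u v w = \<bar>u\<bar> + \<bar>v\<bar> + \<bar>w\<bar> + sqrt (a^2 + b^2 + c^2)"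

definition PH where
  "PH a b c u v w = ((1 / (MH a b c u v w)^2) *\<^sub>R Q3 a b c,
     (u / MH a b c u v w, v / MH a b c u v w, w / MH a b c u v w))"

definition M6 :: "real^6 \<Rightarrow> real" where
  "M6 x = MH (x$1*x$6) (x$2*x$5) (x$3*x$4) (x$1^2-x$6^2) (x$2^2-x$5^2) (x$3^2-x$4^2)"

definition phi1 :: "real^6 \<Rightarrow> (real \<times> real \<times> real \<times> real \<times> real \<times> real) \<times> real \<times> real \<times> real" where
  "phi1 x = PH (x$1*x$6) (x$2*x$5) (x$3*x$4) (x$1^2-x$6^2) (x$2^2-x$5^2) (x$3^2-x$4^2)"

lemma MH_scale:
  assumes "t \<ge> 0"
  shows "MH (t*a) (t*b) (t*c) (t*u) (t* v) (t*w) = t * MH a b c u v w"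
proof -
  have "(t*a)^2 + (t*b)^2 + (t*c)^2 = t^2 * (a^2+b^2+c^2)" by (simp add: algebra_simps power_mult_distrib)
  then have "sqrt ((t*a)^2 + (t*b)^2 + (t*c)^2) = t * sqrt (a^2+b^2+c^2)"
    using assms by (simp add: real_sqrt_mult)
  then show ?thesis unfolding MH_def using assms by (simp add: abs_mult algebra_simps)
qed

lemma PH_scale:
  assumes "t > 0"
  shows "PH (t*a) (t*b) (t*c) (t*u) (t* v) (t*w) = PH a b c u v w"
proof -
  have m: "MH (t*a) (t*b) (t*c) (t*u) (t* v) (t*w) = t * MH a b c u v w"
    using assms by (simp add: MH_scale)
  have "t * t / (t^2 * (MH a b c u v w)^2) = 1 / (MH a b c u v w)^2"
    using assms by (cases "MH a b c u v w = 0") (simp_all add: field_simps power2_eq_square)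
  then show ?thesis unfolding PH_def m Q3_scale using assms
    by (simp add: power_mult_distrib)
qed

lemma PH_sign:
  assumes "s * s = 1"
  shows "PH (s * a) (s * b) (s * c) u v w = PH a b c u v w"
proof -
  have q: "(s * a)^2 = a^2" for a
  proof -
    have "(s * a)^2 = (s * s) * a^2" by (simp add: power2_eq_square ac_simps)
    then show ?thesis using assms by simp
  qed
  have m: "MH (s * a) (s * b) (s * c) u v w = MH a b c u v w"
    unfolding MH_def by (simp only: q)
  show ?thesis unfolding PH_def m Q3_scale using assms by simp
qed

lemma M6_pos:
  assumes "x \<noteq> 0"
  shows "M6 x > 0"
proof (rule ccontr)
  assume "\<not> M6 x > 0"
  moreover have "M6 x \<ge> 0" unfolding M6_def MH_def by simp
  ultimately have "M6 x = 0" by simp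
  have eq: "M6 x = \<bar>x$1^2-x$6^2\<bar> + \<bar>x$2^2-x$5^2\<bar> + \<bar>x$3^2-x$4^2\<bar> +
      sqrt ((x$1*x$6)^2 + (x$2*x$5)^2 + (x$3*x$4)^2)" unfolding M6_def MH_def by simp
  have n1: "\<bar>x$1^2-x$6^2\<bar> \<ge> 0" "\<bar>x$2^2-x$5^2\<bar> \<ge> 0" "\<bar>x$3^2-x$4^2\<bar> \<ge> 0"
    "sqrt ((x$1*x$6)^2 + (x$2*x$5)^2 + (x$3*x$4)^2) \<ge> 0" by simp_all
  have z: "\<bar>x$1^2-x$6^2\<bar> = 0" "\<bar>x$2^2-x$5^2\<bar> = 0" "\<bar>x$3^2-x$4^2\<bar> = 0"
    "sqrt ((x$1*x$6)^2 + (x$2*x$5)^2 + (x$3*x$4)^2) = 0"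
    using \<open>M6 x = 0\<close> eq n1 by linarith+
  from z(4) have s0: "(x$1*x$6)^2 + (x$2*x$5)^2 + (x$3*x$4)^2 = 0" by simp
  have n2: "(x$1*x$6)^2 \<ge> 0" "(x$2*x$5)^2 \<ge> 0" "(x$3*x$4)^2 \<ge> 0" by simp_all
  have "(x$1*x$6)^2 = 0" "(x$2*x$5)^2 = 0" "(x$3*x$4)^2 = 0" using s0 n2 by linarith+
  then have p: "x$1*x$6 = 0" "x$2*x$5 = 0" "x$3*x$4 = 0" by simp_all
  have pz: "a = 0 \<and> b = 0" if "\<bar>a^2-b^2\<bar> = 0" "a*b = 0" for a b :: real
  proof -
    have "a^2 = b^2" using that(1) by simp
    moreover have "a = 0 \<or> b = 0" using that(2) by simp
    ultimately show ?thesis by auto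
  qed
  have "x$1 = 0 \<and> x$6 = 0" "x$2 = 0 \<and> x$5 = 0" "x$3 = 0 \<and> x$4 = 0"
    using pz z p by blast+
  then have "x = 0" unfolding vec_eq_iff forall_6 by simp
  then show False using assms by simp
qed

lemma scale_prod: "(k *\<^sub>R x)$i * (k *\<^sub>R x)$j = k^2 * (x$i * x$j)"
  by (simp add: power2_eq_square ac_simps)

lemma scale_sq: "((k *\<^sub>R x)$i)^2 - ((k *\<^sub>R x)$j)^2 = k^2 * ((x$i)^2 - (x$j)^2)"
  by (simp add: power_mult_distrib right_diff_distrib)

lemma phi1_scale:
  assumes "k \<noteq> 0"
  shows "phi1 (k *\<^sub>R x) = phi1 x"
proof -
  have t: "k^2 > 0" using assms by simp
  show ?thesis unfolding phi1_def scale_prod scale_sq by (rule PH_scale[OF t])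
qed

lemma M6_scale: "M6 (k *\<^sub>R x) = k^2 * M6 x"
  unfolding M6_def scale_prod scale_sq by (rule MH_scale) simp

lemma Z2_sq: "e \<in> Z2_4 \<Longrightarrow> e$i * e$i = 1"
  unfolding Z2_4_def by (cases "e$i = 1") auto

lemma phi1_act:
  assumes "e \<in> Z2_4"
  shows "phi1 (sym2_act e x) = phi1 x"
proof -
  define s where "s = e$1 * e$2 * e$3 * e$4"
  have ss: "s * s = 1"
  proof -
    have "s * s = (e$1 * e$1) * (e$2 * e$2) * (e$3 * e$3) * (e$4 * e$4)" unfolding s_def by (simp add: ac_simps)
    then show ?thesis using Z2_sq[OF assms] by simp
  qed
  have q: "(e$i * e$j * a)^2 = a^2" for i j a
  proof -
    have "(e$i * e$j * a)^2 = (e$i * e$i) * (e$j * e$j) * a^2" by (simp add: power2_eq_square ac_simps)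
    then show ?thesis using Z2_sq[OF assms] by simp
  qed
  have p: "(e$i * e$j * a) * (e$k * e$l * b) = (e$i * e$j * e$k * e$l) * (a * b)" for i j k l a b
    by (simp add: ac_simps)
  have s2: "e$1 * e$3 * e$2 * e$4 = s" "e$1 * e$4 * e$2 * e$3 = s" unfolding s_def by (simp_all add: ac_simps)
  have "phi1 (sym2_act e x) = PH (s * (x$1*x$6)) (s * (x$2*x$5)) (s * (x$3*x$4))
     (x$1^2-x$6^2) (x$2^2-x$5^2) (x$3^2-x$4^2)"
    unfolding phi1_def sym2_act_def vector_6 q p s2 s_def ..
  also have "\<dots> = phi1 x" unfolding phi1_def by (rule PH_sign[OF ss])
  finally show ?thesis .
qed

lemma sym2_scale: "sym2_act e (k *\<^sub>R x) = k *\<^sub>R sym2_act e x"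
  unfolding sym2_act_def vec_eq_iff forall_6 by (simp add: ac_simps)

lemma phi1_alt: "phi1 x = ((1 / (M6 x)^2) *\<^sub>R Q3 (x$1*x$6) (x$2*x$5) (x$3*x$4),
   ((x$1^2-x$6^2) / M6 x, (x$2^2-x$5^2) / M6 x, (x$3^2-x$4^2) / M6 x))"
  unfolding phi1_def PH_def M6_def ..

lemma sym2_invol: "e \<in> Z2_4 \<Longrightarrow> sym2_act e (sym2_act e x) = x"
  unfolding sym2_act_def vec_eq_iff forall_6
  using Z2_sq[of e] by (simp add: ac_simps)

lemma sym2_zero: "sym2_act e 0 = 0"
  unfolding sym2_act_def vec_eq_iff forall_6 by simp

lemma sym2_nonzero: "e \<in> Z2_4 \<Longrightarrow> x \<noteq> 0 \<Longrightarrow> sym2_act e x \<noteq> 0"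
  by (metis sym2_invol sym2_zero)

lemma phi1_fiber:
  fixes x y :: "real^6"
  assumes x0: "x \<noteq> 0" and y0: "y \<noteq> 0"
  shows "phi1 x = phi1 y \<longleftrightarrow> (\<exists>e\<in>Z2_4. \<exists>c. c \<noteq> 0 \<and> y = c *\<^sub>R sym2_act e x)"
proof
  assume "\<exists>e\<in>Z2_4. \<exists>c. c \<noteq> 0 \<and> y = c *\<^sub>R sym2_act e x"
  then obtain e c where "e \<in> Z2_4" "c \<noteq> 0" "y = c *\<^sub>R sym2_act e x" by blast
  then show "phi1 x = phi1 y" by (simp add: phi1_scale phi1_act)
next
  assume eq: "phi1 x = phi1 y"
  define m where "m = M6 x"
  define m' where "m' = M6 y"
  have mp: "m > 0" "m' > 0" unfolding m_def m'_def using M6_pos x0 y0 by auto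
  define r where "r = sqrt (m'/m)"
  have r0: "r \<noteq> 0" using mp unfolding r_def by simp
  have rr: "r^2 = m'/m" using mp unfolding r_def by simp
  define x' where "x' = r *\<^sub>R x"
  have Mx': "M6 x' = m'" unfolding x'_def M6_scale rr m_def[symmetric] using mp by simp
  have eq': "phi1 x' = phi1 y" unfolding x'_def phi1_scale[OF r0] by (rule eq)
  then have e1: "(1 / m'^2) *\<^sub>R Q3 (x'$1*x'$6) (x'$2*x'$5) (x'$3*x'$4) =
                 (1 / m'^2) *\<^sub>R Q3 (y$1*y$6) (y$2*y$5) (y$3*y$4)"
    and e2: "(x'$1^2-x'$6^2) / m' = (y$1^2-y$6^2) / m'" "(x'$2^2-x'$5^2) / m' = (y$2^2-y$5^2) / m'"
            "(x'$3^2-x'$4^2) / m' = (y$3^2-y$4^2) / m'"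
    unfolding phi1_alt Mx' m'_def[symmetric] by simp_all
  from e1 have "Q3 (x'$1*x'$6) (x'$2*x'$5) (x'$3*x'$4) = Q3 (y$1*y$6) (y$2*y$5) (y$3*y$4)"
    using mp by simp
  then obtain d where d: "d*d = 1" "y$1*y$6 = d*(x'$1*x'$6)" "y$2*y$5 = d*(x'$2*x'$5)" "y$3*y$4 = d*(x'$3*x'$4)"
    using Q3_eq by blast
  have w: "y$1^2-y$6^2 = x'$1^2-x'$6^2" "y$2^2-y$5^2 = x'$2^2-x'$5^2" "y$3^2-y$4^2 = x'$3^2-x'$4^2"
    using e2 mp by (simp_all add: divide_cancel_right)
  have s1: "(y$1)^2 = (x'$1)^2 \<and> (y$6)^2 = (x'$6)^2" by (rule squares_lemma[OF w(1) d(2) d(1)])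
  have s2: "(y$2)^2 = (x'$2)^2 \<and> (y$5)^2 = (x'$5)^2" by (rule squares_lemma[OF w(2) d(3) d(1)])
  have s3: "(y$3)^2 = (x'$3)^2 \<and> (y$4)^2 = (x'$4)^2" by (rule squares_lemma[OF w(3) d(4) d(1)])
  have sq: "(y$i)^2 = (x'$i)^2" for i
    using exhaust_6[of i] s1 s2 s3 by auto
  obtain e c where ec: "e \<in> Z2_4" "c \<noteq> 0" "y = c *\<^sub>R sym2_act e x'"
    using sign_lemma[OF sq d(1) d(2) d(3) d(4)] by blast
  have "y = (c * r) *\<^sub>R sym2_act e x" using ec(3) unfolding x'_def sym2_scale by simp
  then show "\<exists>e\<in>Z2_4. \<exists>c. c \<noteq> 0 \<and> y = c *\<^sub>R sym2_act e x"
    using ec(1,2) r0 by (intro bexI[of _ e] exI[of _ "c*r"]) auto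
qed

lemma cont_M6: "continuous_on S M6"
  unfolding M6_def[abs_def] MH_def by (intro continuous_intros)

lemma cont_phi1: "continuous_on (UNIV - {0::real^6}) phi1"
proof -
  have e: "phi1 = (\<lambda>x::real^6. ((1 / (M6 x)^2) *\<^sub>R Q3 (x$1*x$6) (x$2*x$5) (x$3*x$4),
   ((x$1^2-x$6^2) / M6 x, (x$2^2-x$5^2) / M6 x, (x$3^2-x$4^2) / M6 x)))"
    by (rule ext) (rule phi1_alt)
  show ?thesis unfolding e Q3_def
    by (intro continuous_intros cont_M6) (auto dest: M6_pos)
qed

lemma act_pq:
  assumes "e \<in> Z2_4"
  shows "RP5_act e (pq x) = pq (sym2_act e x)"
proof
  show "RP5_act e (pq x) \<subseteq> pq (sym2_act e x)"
  proof
    fix z assume "z \<in> RP5_act e (pq x)"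
    then obtain y c where "y \<noteq> 0" "c \<noteq> 0" "y = c *\<^sub>R x" "z = sym2_act e y"
      unfolding RP5_act_def pq_def by auto
    then show "z \<in> pq (sym2_act e x)"
      unfolding pq_def using sym2_nonzero[OF assms] by (auto simp: sym2_scale)
  qed
next
  show "pq (sym2_act e x) \<subseteq> RP5_act e (pq x)"
  proof
    fix z assume "z \<in> pq (sym2_act e x)"
    then obtain c where c: "z \<noteq> 0" "c \<noteq> 0" "z = c *\<^sub>R sym2_act e x"
      unfolding pq_def by auto
    have "z = sym2_act e (c *\<^sub>R x)" using c by (simp add: sym2_scale)
    moreover have "c *\<^sub>R x \<in> pq x" using c sym2_zero unfolding pq_def by auto
    ultimately show "z \<in> RP5_act e (pq x)" unfolding RP5_act_def by blast
  qed
qed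

lemma orbit_homeo:
  obtains F where "RP5_orbit_space homeomorphic_space subtopology euclidean (F ` topspace RP5)"
    "\<And>x. x \<noteq> 0 \<Longrightarrow> F (pq x) = phi1 x"
proof -
  obtain F where F: "continuous_map RP5 euclidean F" "\<And>x. x \<noteq> 0 \<Longrightarrow> F (pq x) = phi1 x"
    using proj_lift[OF cont_phi1 phi1_scale] by metis
  have "RP5_orbit_space homeomorphic_space subtopology euclidean (F ` topspace RP5)"
    unfolding RP5_orbit_space_def
  proof (rule quotient_space_homeo[OF F(1) compact_proj Hausdorff_space_euclidean])
    fix P Q assume "P \<in> topspace RP5" "Q \<in> topspace RP5"
    then obtain x y :: "real^6" where xy: "x \<noteq> 0" "y \<noteq> 0" "P = pq x" "Q = pq y"
      unfolding topspace_proj by auto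
    have "(\<exists>e\<in>Z2_4. Q = RP5_act e P) \<longleftrightarrow> (\<exists>e\<in>Z2_4. \<exists>c. c \<noteq> 0 \<and> y = c *\<^sub>R sym2_act e x)"
    proof -
      have "Q = RP5_act e P \<longleftrightarrow> (\<exists>c. c \<noteq> 0 \<and> y = c *\<^sub>R sym2_act e x)" if "e \<in> Z2_4" for e
        unfolding xy act_pq[OF that]
        using pq_eq[OF sym2_nonzero[OF that xy(1)] xy(2)] by metis
      then show ?thesis by blast
    qed
    also have "\<dots> \<longleftrightarrow> F P = F Q" using phi1_fiber[OF xy(1,2)] F(2) xy by simp
    finally show "(\<exists>e\<in>Z2_4. Q = RP5_act e P) \<longleftrightarrow> F P = F Q" .
  qed
  then show ?thesis using that F(2) by blast
qed

definition nu :: "real^3 \<Rightarrow> real" where "nu v = \<bar>v$1\<bar> + \<bar>v$2\<bar> + \<bar>v$3\<bar>"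
definition Oct :: "(real^3) set" where "Oct = {v. nu v \<le> 1}"
definition Lm :: "real^3 \<Rightarrow> real^4" where
  "Lm v = vector [(v$1+v$2+v$3)/2, (v$1-v$2-v$3)/2, (-v$1+v$2-v$3)/2, (-v$1-v$2+v$3)/2]"
definition cen :: "real^4" where "cen = vector [1/2,1/2,1/2,1/2]"
definition winv :: "real^4 \<Rightarrow> real^3" where
  "winv p = vector [(p$1+p$2-p$3-p$4)/2, (p$1-p$2+p$3-p$4)/2, (p$1-p$2-p$3+p$4)/2]"

lemma winv_fD: "winv (cen + Lm v) = v"
  unfolding winv_def cen_def Lm_def vec_eq_iff forall_3 by (simp add: field_simps)

lemma linear_Lm: "linear Lm"
  unfolding linear_iff Lm_def vec_eq_iff forall_4 by (simp add: field_simps)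

lemma inj_Lm: "inj Lm"
  by (metis injI winv_fD)

lemma nu_scale: "nu (c *\<^sub>R v) = \<bar>c\<bar> * nu v"
  unfolding nu_def by (simp add: abs_mult algebra_simps)

lemma cont_nu: "continuous_on S nu"
  unfolding nu_def[abs_def] by (intro continuous_intros)

lemma convex_Oct: "convex Oct"
  unfolding convex_def Oct_def
proof (intro ballI allI impI, simp)
  fix x y :: "real^3" and u v :: real
  assume xy: "nu x \<le> 1" "nu y \<le> 1" and uv: "0 \<le> u" "0 \<le> v" "u + v = 1"
  have c: "\<bar>u * x$i + v * y$i\<bar> \<le> u * \<bar>x$i\<bar> + v * \<bar>y$i\<bar>" for i
    using abs_triangle_ineq[of "u * x$i" "v * y$i"] uv by (simp add: abs_mult)
  have "nu (u *\<^sub>R x + v *\<^sub>R y) \<le> u * nu x + v * nu y"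
    unfolding nu_def using c[of 1] c[of 2] c[of 3] by (simp add: algebra_simps)
  also have "\<dots> \<le> u * 1 + v * 1" using xy uv by (intro add_mono mult_left_mono) auto
  finally show "nu (u *\<^sub>R x + v *\<^sub>R y) \<le> 1" using uv by simp
qed

definition "E1 = (vector [1,0,0] :: real^3)"
definition "E2 = (vector [0,1,0] :: real^3)"
definition "E3 = (vector [0,0,1] :: real^3)"

lemma Oct_hull: "convex hull {E1, E2, E3, -E3, -E2, -E1} = Oct"
proof
  show "convex hull {E1, E2, E3, -E3, -E2, -E1} \<subseteq> Oct"
  proof (rule hull_minimal)
    show "{E1, E2, E3, -E3, -E2, -E1} \<subseteq> Oct" by (auto simp: Oct_def nu_def E1_def E2_def E3_def)
  qed (rule convex_Oct)
next
  show "Oct \<subseteq> convex hull {E1, E2, E3, -E3, -E2, -E1}"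
  proof
    fix v assume "v \<in> Oct"
    then have n: "nu v \<le> 1" by (simp add: Oct_def)
    define r where "r = (1 - nu v) / 6"
    define u where "u = (\<lambda>p. if p = E1 then max (v$1) 0 + r else if p = -E1 then max (-v$1) 0 + r
       else if p = E2 then max (v$2) 0 + r else if p = -E2 then max (-v$2) 0 + r
       else if p = E3 then max (v$3) 0 + r else max (-v$3) 0 + r)"
    have d: "E1 \<noteq> E2" "E1 \<noteq> E3" "E1 \<noteq> -E3" "E1 \<noteq> -E2" "E1 \<noteq> -E1"
      "E2 \<noteq> E3" "E2 \<noteq> -E3" "E2 \<noteq> -E2" "E2 \<noteq> -E1"
      "E3 \<noteq> -E3" "E3 \<noteq> -E2" "E3 \<noteq> -E1"
      "-E3 \<noteq> -E2" "-E3 \<noteq> -E1" "-E2 \<noteq> -E1"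
      unfolding E1_def E2_def E3_def vec_eq_iff forall_3 by simp_all
    have r0: "r \<ge> 0" using n by (simp add: r_def)
    have sumu: "sum u {E1, E2, E3, -E3, -E2, -E1} = 1"
    proof -
      have "sum u {E1, E2, E3, -E3, -E2, -E1} = (max (v$1) 0 + max (-v$1) 0) + (max (v$2) 0 + max (-v$2) 0)
         + (max (v$3) 0 + max (-v$3) 0) + 6*r"
        using d unfolding u_def by (simp add: algebra_simps)
      moreover have mx: "max t 0 + max (-t) 0 = \<bar>t\<bar>" for t :: real by (simp add: max_def abs_if)
      ultimately show ?thesis unfolding r_def nu_def by (simp add: field_simps)
    qed
    have sumv: "sum (\<lambda>p. u p *\<^sub>R p) {E1, E2, E3, -E3, -E2, -E1} = v"
    proof -
      have ev: "u E1 = max (v$1) 0 + r" "u (-E1) = max (-v$1) 0 + r" "u E2 = max (v$2) 0 + r"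
        "u (-E2) = max (-v$2) 0 + r" "u E3 = max (v$3) 0 + r" "u (-E3) = max (-v$3) 0 + r"
        using d d[THEN not_sym] unfolding u_def by simp_all
      have "sum (\<lambda>p. u p *\<^sub>R p) {E1, E2, E3, -E3, -E2, -E1} =
         u E1 *\<^sub>R E1 + (u E2 *\<^sub>R E2 + (u E3 *\<^sub>R E3 + (u (-E3) *\<^sub>R (-E3) + (u (-E2) *\<^sub>R (-E2) + u (-E1) *\<^sub>R (-E1)))))"
        using d d[THEN not_sym] by simp
      also have "\<dots> = v"
        unfolding ev vec_eq_iff forall_3 by (simp add: E1_def E2_def E3_def max_def)
      finally show ?thesis .
    qed
    have pos: "\<forall>p\<in>{E1, E2, E3, -E3, -E2, -E1}. 0 \<le> u p"
      using r0 d unfolding u_def by auto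
    show "v \<in> convex hull {E1, E2, E3, -E3, -E2, -E1}"
      unfolding convex_hull_finite[OF finite.insertI[OF finite.insertI[OF finite.insertI[OF finite.insertI[OF finite.insertI[OF finite.insertI[OF finite.emptyI]]]]]]]
      using sumu sumv pos by blast
  qed
qed

lemma fD_points:
  "cen + Lm E1 = vector [1,1,0,0]" "cen + Lm E2 = vector [1,0,1,0]" "cen + Lm E3 = vector [1,0,0,1]"
  "cen + Lm (-E3) = vector [0,1,1,0]" "cen + Lm (-E2) = vector [0,1,0,1]" "cen + Lm (-E1) = vector [0,0,1,1]"
  unfolding cen_def Lm_def E1_def E2_def E3_def vec_eq_iff forall_4 by simp_all

lemma Delta42_eq: "Delta42 = (\<lambda>x. cen + x) ` (Lm ` Oct)"
proof -
  have "Delta42 = convex hull ((\<lambda>x. cen + x) ` (Lm ` {E1, E2, E3, -E3, -E2, -E1}))"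
    unfolding Delta42_def by (simp add: fD_points)
  also have "\<dots> = (\<lambda>x. cen + x) ` (Lm ` Oct)"
    unfolding convex_hull_translation convex_hull_linear_image[OF linear_Lm, symmetric] Oct_hull ..
  finally show ?thesis .
qed

lemma closed_Oct: "closed Oct"
  unfolding Oct_def by (intro closed_Collect_le cont_nu continuous_on_const)

lemma norm_nu: "norm v \<le> nu v"
  using norm_le_l1_cart[of v] unfolding nu_def sum_3 .

lemma compact_Oct: "compact Oct"
proof -
  have "bounded Oct" unfolding bounded_iff Oct_def using norm_nu by (metis mem_Collect_eq order.trans)
  then show ?thesis using closed_Oct by (simp add: compact_eq_bounded_closed)
qed

lemma interior_Oct: "interior Oct = {v. nu v < 1}"
proof
  show "{v. nu v < 1} \<subseteq> interior Oct"
    by (rule interior_maximal) (auto simp: Oct_def intro!: open_Collect_less cont_nu continuous_on_const)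
next
  show "interior Oct \<subseteq> {v. nu v < 1}"
  proof
    fix v assume v: "v \<in> interior Oct"
    then obtain e where e: "e > 0" "ball v e \<subseteq> Oct" by (meson mem_interior)
    have le: "nu v \<le> 1" using v interior_subset Oct_def by blast
    show "v \<in> {v. nu v < 1}"
    proof (rule ccontr)
      assume "v \<notin> {v. nu v < 1}"
      then have n1: "nu v = 1" using le by simp
      then have v0: "v \<noteq> 0" unfolding nu_def by auto
      define t where "t = e / (2 * norm v)"
      have t0: "t > 0" using e v0 by (simp add: t_def)
      have "dist v ((1 + t) *\<^sub>R v) = t * norm v"
        using t0 by (simp add: dist_norm algebra_simps)
      also have "\<dots> = e/2" using v0 by (simp add: t_def)
      finally have "(1 + t) *\<^sub>R v \<in> ball v e" using e by simp
      then have "nu ((1 + t) *\<^sub>R v) \<le> 1" using e Oct_def by blast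
      moreover have "nu ((1 + t) *\<^sub>R v) = 1 + t" using n1 t0 by (simp add: nu_scale)
      ultimately show False using t0 by simp
    qed
  qed
qed

lemma rel_frontier_Oct: "rel_frontier Oct = {v. nu v = 1}"
proof -
  have "(0::real^3) \<in> interior Oct" unfolding interior_Oct by (simp add: nu_def)
  then have "interior Oct \<noteq> {}" by blast
  then have "rel_frontier Oct = frontier Oct" by (rule rel_frontier_nonempty_interior)
  also have "\<dots> = {v. nu v = 1}"
    unfolding frontier_def interior_Oct closure_closed[OF closed_Oct] by (auto simp: Oct_def)
  finally show ?thesis .
qed

lemma rel_frontier_Delta42: "rel_frontier Delta42 = (\<lambda>x. cen + x) ` (Lm ` {v. nu v = 1})"
proof -
  have bl: "bounded_linear Lm" using linear_Lm linear_conv_bounded_linear by blast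
  have cl: "closure (Lm ` Oct) = Lm ` Oct"
    using compact_Oct bl by (simp add: closure_closed compact_imp_closed compact_continuous_image
       linear_continuous_on)
  have ri: "rel_interior (Lm ` Oct) = Lm ` rel_interior Oct"
    by (rule rel_interior_injective_linear_image[OF bl inj_Lm])
  have "rel_frontier (Lm ` Oct) = Lm ` rel_frontier Oct"
    unfolding rel_frontier_def cl ri closure_closed[OF closed_Oct] image_set_diff[OF inj_Lm] ..
  then show ?thesis unfolding Delta42_eq rel_frontier_translation rel_frontier_Oct by simp
qed

lemma Delta42_param:
  assumes "p \<in> Delta42"
  shows "p = cen + Lm (winv p) \<and> nu (winv p) \<le> 1 \<and> (p \<in> rel_frontier Delta42 \<longleftrightarrow> nu (winv p) = 1)"
proof -
  obtain v where v: "v \<in> Oct" "p = cen + Lm v" using assms unfolding Delta42_eq by auto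
  have w: "winv p = v" using v winv_fD by simp
  have "p \<in> rel_frontier Delta42 \<longleftrightarrow> nu v = 1"
    unfolding rel_frontier_Delta42 using v(2) winv_fD by (auto, metis winv_fD)
  then show ?thesis using v w Oct_def by auto
qed

lemma Delta42_in: "nu v \<le> 1 \<Longrightarrow> cen + Lm v \<in> Delta42"
  unfolding Delta42_eq Oct_def by auto

lemma compact_Delta42: "compact Delta42"
  unfolding Delta42_def by (intro compact_convex_hull finite_imp_compact) simp

definition ss3 :: "real^3 \<Rightarrow> real" where "ss3 s = (s$1)^2 + (s$2)^2 + (s$3)^2"
definition hh :: "real^3 \<Rightarrow> real \<times> real \<times> real \<times> real \<times> real \<times> real" where
  "hh s = (1 / ss3 s) *\<^sub>R Q3 (s$1) (s$2) (s$3)"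

lemma ss3_pos: "s \<noteq> 0 \<Longrightarrow> ss3 s > 0"
proof (rule ccontr)
  assume s: "s \<noteq> 0" "\<not> ss3 s > 0"
  have n: "(s$1)^2 \<ge> 0" "(s$2)^2 \<ge> 0" "(s$3)^2 \<ge> 0" by simp_all
  then have "(s$1)^2 = 0" "(s$2)^2 = 0" "(s$3)^2 = 0" using s(2) unfolding ss3_def by linarith+
  then have "s = 0" unfolding vec_eq_iff forall_3 by simp
  then show False using s by simp
qed

lemma ss3_scale: "ss3 (c *\<^sub>R s) = c^2 * ss3 s"
  unfolding ss3_def by (simp add: power_mult_distrib algebra_simps)

lemma hh_scale: "c \<noteq> 0 \<Longrightarrow> hh (c *\<^sub>R s) = hh s"
  unfolding hh_def ss3_scale using Q3_scale[of c "s$1" "s$2" "s$3"]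
  by (simp add: power2_eq_square)

lemma cont_hh: "continuous_on (UNIV - {0}) hh"
  unfolding hh_def[abs_def] ss3_def Q3_def
  by (intro continuous_intros) (auto dest: ss3_pos simp: ss3_def)

lemma hh_norm: "s \<noteq> 0 \<Longrightarrow> hh s = Q3 ((1/sqrt (ss3 s)) * s$1) ((1/sqrt (ss3 s)) * s$2) ((1/sqrt (ss3 s)) * s$3)"
  unfolding hh_def Q3_scale using ss3_pos[of s]
  by (simp add: power_divide)

lemma hh_inj:
  assumes "s \<noteq> 0" "s' \<noteq> 0" "hh s = hh s'"
  shows "\<exists>c. c \<noteq> 0 \<and> s' = c *\<^sub>R s"
proof -
  define t where "t = 1/sqrt (ss3 s)"
  define t' where "t' = 1/sqrt (ss3 s')"
  have tp: "t > 0" "t' > 0" using ss3_pos assms(1,2) unfolding t_def t'_def by auto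
  have "Q3 (t * s$1) (t * s$2) (t * s$3) = Q3 (t' * s'$1) (t' * s'$2) (t' * s'$3)"
    using assms hh_norm unfolding t_def t'_def by metis
  then obtain d where d: "d*d = 1" "t' * s'$1 = d*(t * s$1)" "t' * s'$2 = d*(t * s$2)" "t' * s'$3 = d*(t * s$3)"
    using Q3_eq by blast
  have "s' = (d*t/t') *\<^sub>R s"
    unfolding vec_eq_iff forall_3 using d tp by (simp add: field_simps)
  moreover have "d*t/t' \<noteq> 0" using d tp by auto
  ultimately show ?thesis by blast
qed

definition G :: "real^4 \<Rightarrow> real \<times> real \<times> real \<times> real \<times> real \<times> real \<Rightarrow>
    (real \<times> real \<times> real \<times> real \<times> real \<times> real) \<times> real \<times> real \<times> real" where
  "G p A = ((1 - nu (winv p))^2 *\<^sub>R A, ((winv p)$1, (winv p)$2, (winv p)$3))"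

lemma cont_G: "continuous_on UNIV (\<lambda>z. G (fst z) (snd z))"
  unfolding G_def[abs_def] nu_def winv_def vector_3 by (intro continuous_intros) auto

lemma sqrt_pair: "\<exists>a b::real. a*b = qq \<and> a^2 - b^2 = V"
proof -
  define r where "r = sqrt (V^2 + 4*qq^2)"
  have rV: "r \<ge> \<bar>V\<bar>" unfolding r_def by (simp add: real_le_rsqrt)
  have r2: "r^2 = V^2 + 4*qq^2" unfolding r_def by simp
  define a where "a = sqrt ((r+V)/2)"
  define b where "b = (if qq \<ge> 0 then 1 else -1) * sqrt ((r-V)/2)"
  have a2: "a^2 = (r+V)/2" unfolding a_def using rV by simp
  have b2: "b^2 = (r-V)/2" unfolding b_def using rV by (simp add: power_mult_distrib)
  have "a*b = (if qq \<ge> 0 then 1 else -1) * sqrt (((r+V)/2) * ((r-V)/2))"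
    unfolding a_def b_def by (simp only: real_sqrt_mult mult.left_commute)
  also have "((r+V)/2) * ((r-V)/2) = qq^2" using r2 by (simp add: field_simps power2_eq_square)
  also have "(if qq \<ge> 0 then 1 else -1) * sqrt (qq^2) = qq" by simp
  finally show ?thesis using a2 b2 by (intro exI[of _ a] exI[of _ b]) simp
qed

lemma glued_homeo:
  obtains Hh where "glued_space homeomorphic_space
      subtopology euclidean ((\<lambda>z. G (fst z) (Hh (snd z))) ` (Delta42 \<times> topspace RP2))"
    "\<And>s. s \<noteq> 0 \<Longrightarrow> Hh (pq s) = hh s"
proof -
  obtain Hh where H: "continuous_map RP2 euclidean Hh" "\<And>s. s \<noteq> 0 \<Longrightarrow> Hh (pq s) = hh s"
    using proj_lift[OF cont_hh hh_scale] by metis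
  define X where "X = prod_topology (top_of_set Delta42) RP2"
  define Phi2 where "Phi2 = (\<lambda>z. G (fst z) (Hh (snd z)))"
  have tX: "topspace X = Delta42 \<times> topspace RP2" unfolding X_def by simp
  have c1: "continuous_map X euclidean fst"
    using continuous_map_fst[of "top_of_set Delta42" RP2] unfolding X_def
    by (simp add: continuous_map_in_subtopology)
  have c2: "continuous_map X euclidean (\<lambda>z. Hh (snd z))"
    using continuous_map_compose[OF continuous_map_snd H(1)] unfolding X_def by (simp add: o_def)
  have c3: "continuous_map X euclidean (\<lambda>z. (fst z, Hh (snd z)))"
    using continuous_map_pairedI[OF c1 c2] by simp
  have c4: "continuous_map euclidean euclidean (\<lambda>z. G (fst z) (snd z))"
    using cont_G by simp
  have cP: "continuous_map X euclidean Phi2"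
    using continuous_map_compose[OF c3 c4] unfolding Phi2_def by (simp add: o_def)
  have cX: "compact_space X"
  proof -
    have "compact_space (top_of_set Delta42)"
      using compact_Delta42 by (simp add: compact_space_subtopology)
    then show ?thesis unfolding X_def compact_space_prod_topology using compact_proj by blast
  qed
  have "quotient_space X (\<lambda>p q. p = q \<or> (fst p = fst q \<and> fst p \<in> rel_frontier Delta42))
        homeomorphic_space subtopology euclidean (Phi2 ` topspace X)"
  proof (rule quotient_space_homeo[OF cP cX Hausdorff_space_euclidean])
    fix z z' assume zz: "z \<in> topspace X" "z' \<in> topspace X"
    then obtain p s p' s' where P: "z = (p, pq s)" "z' = (p', pq s')" "p \<in> Delta42" "p' \<in> Delta42"
      "s \<noteq> 0" "s' \<noteq> 0"
      unfolding tX topspace_proj by auto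
    have Ph: "Phi2 z = ((1 - nu (winv p))^2 *\<^sub>R hh s, ((winv p)$1, (winv p)$2, (winv p)$3))"
             "Phi2 z' = ((1 - nu (winv p'))^2 *\<^sub>R hh s', ((winv p')$1, (winv p')$2, (winv p')$3))"
      unfolding Phi2_def G_def P using H(2) P by simp_all
    note D = Delta42_param[OF P(3)] 
    note D' = Delta42_param[OF P(4)]
    show "(z = z' \<or> (fst z = fst z' \<and> fst z \<in> rel_frontier Delta42)) \<longleftrightarrow> Phi2 z = Phi2 z'"
    proof
      assume "z = z' \<or> (fst z = fst z' \<and> fst z \<in> rel_frontier Delta42)"
      then show "Phi2 z = Phi2 z'"
      proof
        assume "fst z = fst z' \<and> fst z \<in> rel_frontier Delta42"
        then have "p = p'" "nu (winv p) = 1" using P D by auto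
        then show ?thesis unfolding Ph by simp
      qed simp
    next
      assume eq: "Phi2 z = Phi2 z'"
      then have "winv p = winv p'" unfolding Ph vec_eq_iff forall_3 by simp
      then have pp: "p = p'" using D D' by metis
      show "z = z' \<or> (fst z = fst z' \<and> fst z \<in> rel_frontier Delta42)"
      proof (cases "nu (winv p) = 1")
        case True then show ?thesis using pp P D by auto
      next
        case False
        then have "(1 - nu (winv p))^2 \<noteq> 0" by simp
        then have "hh s = hh s'" using eq unfolding Ph pp by simp
        then obtain c where "c \<noteq> 0" "s' = c *\<^sub>R s" using hh_inj P(5,6) by blast
        then have "pq s = pq s'" using pq_eq P(5,6) by blast
        then show ?thesis using P pp by simp
      qed
    qed
  qed
  then show ?thesis using that H(2) unfolding glued_space_def X_def Phi2_def tX by simp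
qed

lemma La:
  fixes x :: "real^6"
  assumes x0: "x \<noteq> 0"
  shows "\<exists>p\<in>Delta42. \<exists>s. s \<noteq> 0 \<and> phi1 x = G p (hh s)"
proof -
  define m where "m = M6 x"
  have mp: "m > 0" using M6_pos[OF x0] by (simp add: m_def)
  define w1 where "w1 = x$1^2-x$6^2"
  define w2 where "w2 = x$2^2-x$5^2"
  define w3 where "w3 = x$3^2-x$4^2"
  define a where "a = x$1*x$6"
  define b where "b = x$2*x$5"
  define c where "c = x$3*x$4"
  define K where "K = a^2 + b^2 + c^2"
  have mdef: "m = \<bar>w1\<bar> + \<bar>w2\<bar> + \<bar>w3\<bar> + sqrt K"
    unfolding m_def M6_def MH_def w1_def w2_def w3_def a_def b_def c_def K_def ..
  have ph: "phi1 x = ((1 / m^2) *\<^sub>R Q3 a b c, (w1/m, w2/m, w3/m))"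
    unfolding phi1_alt m_def a_def b_def c_def w1_def w2_def w3_def ..
  define V :: "real^3" where "V = vector [w1/m, w2/m, w3/m]"
  have n: "nu V = (\<bar>w1\<bar> + \<bar>w2\<bar> + \<bar>w3\<bar>) / m"
    unfolding nu_def V_def using mp by (simp add: abs_divide add_divide_distrib)
  have "1 - nu V = (m - (\<bar>w1\<bar> + \<bar>w2\<bar> + \<bar>w3\<bar>)) / m"
    unfolding n using mp by (simp add: diff_divide_distrib)
  also have "m - (\<bar>w1\<bar> + \<bar>w2\<bar> + \<bar>w3\<bar>) = sqrt K" using mdef by simp
  finally have nuV: "1 - nu V = sqrt K / m" .
  have K0: "K \<ge> 0" unfolding K_def by simp
  have "sqrt K / m \<ge> 0" using mp K0 by simp
  then have "nu V \<le> 1" using nuV by simp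
  then have pD: "cen + Lm V \<in> Delta42" by (rule Delta42_in)
  have Gv: "G (cen + Lm V) A = ((sqrt K / m)^2 *\<^sub>R A, (w1/m, w2/m, w3/m))" for A
    unfolding G_def winv_fD nuV by (simp add: V_def)
  show ?thesis
  proof (cases "K = 0")
    case True
    have "a^2 \<ge> 0" "b^2 \<ge> 0" "c^2 \<ge> 0" by simp_all
    then have "a^2 = 0" "b^2 = 0" "c^2 = 0" using True unfolding K_def by linarith+
    then have "a = 0" "b = 0" "c = 0" by simp_all
    then have "phi1 x = G (cen + Lm V) (hh E1)" unfolding ph Gv using True by (simp add: Q3_def zero_prod_def)
    moreover have "E1 \<noteq> 0" unfolding E1_def vec_eq_iff by (auto intro!: exI[of _ 1])
    ultimately show ?thesis using pD by blast
  next
    case False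
    then have Kp: "K > 0" using K0 by simp
    define s :: "real^3" where "s = vector [a, b, c]"
    have ss: "ss3 s = K" unfolding ss3_def s_def K_def by simp
    have s0: "s \<noteq> 0" using ss Kp by (auto simp: ss3_def)
    have "hh s = (1 / K) *\<^sub>R Q3 a b c" unfolding hh_def ss by (simp add: s_def)
    then have "G (cen + Lm V) (hh s) = phi1 x" unfolding Gv ph using Kp mp
      by (simp add: power_divide)
    then show ?thesis using pD s0 by metis
  qed
qed

lemma Lb:
  fixes s :: "real^3"
  assumes pD: "p \<in> Delta42" and s0: "s \<noteq> 0"
  shows "\<exists>x::real^6. x \<noteq> 0 \<and> phi1 x = G p (hh s)"
proof -
  define V where "V = winv p"
  have nl: "nu V \<le> 1" using Delta42_param[OF pD] by (simp add: V_def)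
  define K where "K = ss3 s"
  have Kp: "K > 0" using ss3_pos[OF s0] by (simp add: K_def)
  define l where "l = (1 - nu V) / sqrt K"
  have l0: "l \<ge> 0" using nl Kp by (simp add: l_def)
  obtain a1 b1 where p1: "a1*b1 = l * s$1" "a1^2 - b1^2 = V$1" using sqrt_pair by blast
  obtain a2 b2 where p2: "a2*b2 = l * s$2" "a2^2 - b2^2 = V$2" using sqrt_pair by blast
  obtain a3 b3 where p3: "a3*b3 = l * s$3" "a3^2 - b3^2 = V$3" using sqrt_pair by blast
  define x :: "real^6" where "x = vector [a1, a2, a3, b3, b2, b1]"
  have sq: "sqrt ((l * s$1)^2 + (l * s$2)^2 + (l * s$3)^2) = 1 - nu V"
  proof -
    have "(l * s$1)^2 + (l * s$2)^2 + (l * s$3)^2 = l^2 * K"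
      unfolding K_def ss3_def by (simp add: power_mult_distrib algebra_simps)
    then have "sqrt ((l * s$1)^2 + (l * s$2)^2 + (l * s$3)^2) = l * sqrt K"
      using l0 Kp by (simp add: real_sqrt_mult)
    also have "\<dots> = 1 - nu V" using Kp by (simp add: l_def)
    finally show ?thesis .
  qed
  have M1: "M6 x = 1"
    unfolding M6_def MH_def x_def vector_6 p1 p2 p3 sq by (simp add: nu_def)
  have x0: "x \<noteq> 0"
  proof
    assume "x = 0"
    then have "M6 x = 0" unfolding M6_def MH_def by simp
    then show False using M1 by simp
  qed
  have "phi1 x = (Q3 (l * s$1) (l * s$2) (l * s$3), (V$1, V$2, V$3))"
    unfolding phi1_alt M1 unfolding x_def vector_6 p1 p2 p3 by simp
  also have "\<dots> = G p (hh s)"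
  proof -
    have "l * l = (1 - nu V)^2 * (1 / K)"
      unfolding l_def using Kp by (simp add: power2_eq_square field_simps)
    then show ?thesis unfolding G_def hh_def Q3_scale K_def[symmetric] V_def[symmetric] by simp
  qed
  finally show ?thesis using x0 by blast
qed

theorem mainTheorem17:
  shows "RP5_orbit_space homeomorphic_space glued_space"
proof -
  obtain F where F: "RP5_orbit_space homeomorphic_space subtopology euclidean (F ` topspace RP5)"
    "\<And>x. x \<noteq> 0 \<Longrightarrow> F (pq x) = phi1 x"
    using orbit_homeo by blast
  obtain Hh where H: "glued_space homeomorphic_space
      subtopology euclidean ((\<lambda>z. G (fst z) (Hh (snd z))) ` (Delta42 \<times> topspace RP2))"
    "\<And>s. s \<noteq> 0 \<Longrightarrow> Hh (pq s) = hh s"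
    using glued_homeo by blast
  have "F ` topspace RP5 = (\<lambda>z. G (fst z) (Hh (snd z))) ` (Delta42 \<times> topspace RP2)"
  proof
    show "F ` topspace RP5 \<subseteq> (\<lambda>z. G (fst z) (Hh (snd z))) ` (Delta42 \<times> topspace RP2)"
    proof
      fix y assume "y \<in> F ` topspace RP5"
      then obtain x :: "real^6" where x0: "x \<noteq> 0" "y = F (pq x)" unfolding topspace_proj by blast
      then have x: "x \<noteq> 0" "y = phi1 x" using F(2)[OF x0(1)] by simp_all
      obtain p s where ps: "p \<in> Delta42" "s \<noteq> 0" "phi1 x = G p (hh s)" using La[OF x(1)] by blast
      have "(p, pq s) \<in> Delta42 \<times> topspace RP2" using ps unfolding topspace_proj by auto
      moreover have "y = G (fst (p, pq s)) (Hh (snd (p, pq s)))" using ps x H(2) by simp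
      ultimately show "y \<in> (\<lambda>z. G (fst z) (Hh (snd z))) ` (Delta42 \<times> topspace RP2)" by blast
    qed
  next
    show "(\<lambda>z. G (fst z) (Hh (snd z))) ` (Delta42 \<times> topspace RP2) \<subseteq> F ` topspace RP5"
    proof
      fix y assume "y \<in> (\<lambda>z. G (fst z) (Hh (snd z))) ` (Delta42 \<times> topspace RP2)"
      then obtain z where z: "z \<in> Delta42 \<times> topspace RP2" "y = G (fst z) (Hh (snd z))" by (rule imageE)
      obtain p C where pC: "z = (p, C)" by (cases z)
      have "C \<in> pq ` (UNIV - {0::real^3})" using z(1) pC topspace_proj by auto
      then obtain s :: "real^3" where s: "s \<noteq> 0" "C = pq s" by blast
      have ps: "p \<in> Delta42" "s \<noteq> 0" "y = G p (hh s)" using z pC s H(2)[OF s(1)] by auto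
      obtain x :: "real^6" where x: "x \<noteq> 0" "phi1 x = G p (hh s)" using Lb[OF ps(1,2)] by blast
      have "pq x \<in> topspace RP5" unfolding topspace_proj using x by auto
      moreover have "y = F (pq x)" using x ps F(2) by simp
      ultimately show "y \<in> F ` topspace RP5" by blast
    qed
  qed
  then have "subtopology euclidean (F ` topspace RP5) homeomorphic_space glued_space"
    using homeomorphic_space_sym[THEN iffD1, OF H(1)] by simp
  then show ?thesis by (rule homeomorphic_space_trans[OF F(1)])
qed

end
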